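(* Let $A=R/I$ be a graded Artinian Gorenstein algebra of socle degree $j$ with $I_2=\langle w^2,wx,wy\rangle$, and let $F=G+WZ^{[j-1]}$, $G\in K_{DP}[X,Y,Z]_j$, be a dual generator of $I$. Let $J=\mathrm{Ann}_R(G)$, $J'=J\cap K[x,y,z]$, $R'=K[x,y,z]$ and $\alpha=\alpha(J)$. Then either $H(R/I)=H(R'/J')+H_\alpha$ or $H(R/I)=H(R'/J')+H_0$, and the second possibility can occur only if $\alpha\ge j/2$.
   Context: $K$ algebraically closed, $R=K[w,x,y,z]$, divided power algebra $\mathcal D=K_{DP}[W,X,Y,Z]$ with contraction action of $R$; $I=\mathrm{Ann}(F)$. $\alpha(J)=\min\{\alpha\ge1: J'_\alpha\not\subset(x,y)R'\}$. For $2\le\alpha\le j$ define the sequence $H_\alpha=(h_0,\dots,h_j)$ by $h_0=h_j=0$ and: if $\alpha\le j/2$, $h_i=1$ for $1\le i\le\alpha-1$, $h_i=2$ for $\alpha\le i\le j-\alpha$, $h_i=1$ for $j-\alpha<i\le j-1$; if $\alpha>j/2$, $h_i=1$ for $1\le i\le j-\alpha$, $h_i=0$ for $j-\alpha<i<\alpha$, $h_i=1$ for $\alpha\le i\le j-1$. Also $H_0=(0,1,1,\dots,1,0)$ (length $j+1$). Hilbert functions are added termwise. *)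

theory Defs
  imports "HOL-Computational_Algebra.Polynomial" "HOL-Library.Function_Algebras"
begin

(* Variables w,x,y,z of R = K[w,x,y,z]; the divided-power variables W,X,Y,Z of D
   are indexed by the same datatype. *)
datatype var = vw | vx | vy | vz

type_synonym mono = "var \<Rightarrow> nat"

(* a polynomial (element of R) or a divided power polynomial (element of D)
   is given by its coefficient function on exponent vectors *)
type_synonym 'a pol = "mono \<Rightarrow> 'a"

definition mdeg :: "mono \<Rightarrow> nat" where
  "mdeg m = m vw + m vx + m vy + m vz"

definition madd :: "mono \<Rightarrow> mono \<Rightarrow> mono" where
  "madd a b = (\<lambda>v. a v + b v)"

definition mle :: "mono \<Rightarrow> mono \<Rightarrow> bool" where
  "mle a b = (\<forall>v. a v \<le> b v)"

definition msub :: "mono \<Rightarrow> mono \<Rightarrow> mono" where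
  "msub a b = (\<lambda>v. a v - b v)"

definition supp :: "('a::zero) pol \<Rightarrow> mono set" where
  "supp f = {m. f m \<noteq> 0}"

definition polys :: "('a::zero) pol set" where
  "polys = {f. finite (supp f)}"

definition monom1 :: "mono \<Rightarrow> ('a::{zero,one}) pol" where
  "monom1 e = (\<lambda>m. if m = e then 1 else 0)"

definition expv :: "nat \<Rightarrow> nat \<Rightarrow> nat \<Rightarrow> nat \<Rightarrow> mono" where
  "expv a b c d = (\<lambda>v. case v of vw \<Rightarrow> a | vx \<Rightarrow> b | vy \<Rightarrow> c | vz \<Rightarrow> d)"

definition homog :: "nat \<Rightarrow> ('a::zero) pol \<Rightarrow> bool" where
  "homog d f = (\<forall>m. f m \<noteq> 0 \<longrightarrow> mdeg m = d)"

definition no_w :: "('a::zero) pol \<Rightarrow> bool" where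
  "no_w f = (\<forall>m. f m \<noteq> 0 \<longrightarrow> m vw = 0)"

definition polys' :: "('a::zero) pol set" where
  "polys' = {f \<in> polys. no_w f}"

definition pmul :: "('a::comm_ring_1) pol \<Rightarrow> 'a pol \<Rightarrow> 'a pol" where
  "pmul f g = (\<lambda>m. \<Sum>a\<in>{a. mle a m}. f a * g (msub m a))"

(* contraction action of R on D:  x^a o X^[b] = X^[b-a] if a \<le> b, else 0 *)
definition contract :: "('a::comm_ring_1) pol \<Rightarrow> 'a pol \<Rightarrow> 'a pol" where
  "contract f F = (\<lambda>c. \<Sum>m\<in>supp f. f m * F (madd m c))"

definition Ann :: "('a::comm_ring_1) pol \<Rightarrow> 'a pol set" where
  "Ann F = {f \<in> polys. contract f F = (\<lambda>_. 0)}"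

definition pscale :: "'a::comm_ring_1 \<Rightarrow> 'a pol \<Rightarrow> 'a pol" where
  "pscale c f = (\<lambda>m. c * f m)"

definition hilb :: "('a::field) pol set \<Rightarrow> 'a pol set \<Rightarrow> nat \<Rightarrow> nat" where
  "hilb S Q i = vector_space.dim pscale {f \<in> S. homog i f}
              - vector_space.dim pscale {f \<in> Q \<inter> S. homog i f}"

definition xyR' :: "('a::comm_ring_1) pol set" where
  "xyR' = {\<lambda>m. pmul (monom1 (expv 0 1 0 0)) g m + pmul (monom1 (expv 0 0 1 0)) h m
           | g h. g \<in> polys' \<and> h \<in> polys'}"

definition alpha_inv :: "('a::comm_ring_1) pol set \<Rightarrow> nat" where
  "alpha_inv J' = (LEAST a. a \<ge> 1 \<and> (\<exists>f\<in>J'. homog a f \<and> f \<notin> xyR'))"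

(* the sequences H_\<alpha> (2 \<le> \<alpha> \<le> j) of length j+1, extended by 0 beyond index j *)
definition Hseq :: "nat \<Rightarrow> nat \<Rightarrow> nat \<Rightarrow> nat" where
  "Hseq j a i =
    (if i = 0 \<or> i \<ge> j then 0
     else if 2 * a \<le> j then (if i \<le> a - 1 then 1 else if i \<le> j - a then 2 else 1)
     else (if i \<le> j - a then 1 else if i < a then 0 else 1))"

definition H0seq :: "nat \<Rightarrow> nat \<Rightarrow> nat" where
  "H0seq j i = (if i = 0 \<or> i \<ge> j then 0 else 1)"

end

theory Submission
  imports Defs
begin

lemma vs_pscale: "vector_space (pscale :: 'a::field \<Rightarrow> 'a pol \<Rightarrow> 'a pol)"
  by unfold_locales (auto simp: pscale_def fun_eq_iff algebra_simps)

interpretation pv: vector_space "pscale :: 'a::field \<Rightarrow> 'a pol \<Rightarrow> 'a pol"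
  by (rule vs_pscale)

lemma "vector_space.dim pscale = (pv.dim :: 'a::field pol set \<Rightarrow> nat)" by simp

context vector_space begin

lemma span_image_lin:
  assumes L: "\<And>x y. L (x+y) = L x + L y" "\<And>c x. L (scale c x) = scale c (L x)"
  shows "L ` span X = span (L ` X)"
proof -
  have "module_hom scale scale L"
    using L by (simp add: module_hom_iff module_axioms)
  then show ?thesis by (simp add: module_hom.span_image)
qed

lemma dim_insert_fin:
  assumes "S \<subseteq> span W" "finite W"
  shows "dim (insert x S) = (if x \<in> span S then dim S else dim S + 1)"
proof (cases "x \<in> span S")
  case True then show ?thesis
    by (metis dim_span span_redundant)
next
  case False
  obtain B where B: "B \<subseteq> span S" "independent B" "span S \<subseteq> span B" "card B = dim (span S)"
    using basis_exists [of "span S"] by blast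
  have finB: "finite B"
    using independent_span_bound[OF assms(2) B(2)] B(1) assms(1)
    by (meson span_minimal subspace_span subset_trans)
  have "dim (span (insert x S)) = Suc (dim S)"
  proof (rule dim_unique)
    show "insert x B \<subseteq> span (insert x S)"
      by (meson B(1) insertI1 insert_subset order_trans span_base span_mono subset_insertI)
    show "span (insert x S) \<subseteq> span (insert x B)"
      by (metis \<open>B \<subseteq> span S\<close> \<open>span S \<subseteq> span B\<close> span_breakdown_eq span_subspace subsetI subspace_span)
    show "independent (insert x B)"
      by (metis B(1-3) independent_insert span_subspace subspace_span False)
    show "card (insert x B) = Suc (dim S)"
      using B False finB by (metis card_insert_disjoint dim_span span_base subsetD)
  qed
  then show ?thesis
    by (metis False Suc_eq_plus1 dim_span)
qed

lemma rank_nullity_sub: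
  assumes L: "\<And>x y. L (x+y) = L x + L y" "\<And>c x. L (scale c x) = scale c (L x)"
    and V: "subspace V" "V \<subseteq> span W" "finite W"
  shows "dim V = dim {x\<in>V. L x = 0} + dim (L ` V)"
proof -
  let ?K = "{x\<in>V. L x = 0}"
  obtain B0 where B0: "B0 \<subseteq> ?K" "independent B0" "?K \<subseteq> span B0"
    using maximal_independent_subset[of ?K] by blast
  obtain B where B: "B0 \<subseteq> B" "B \<subseteq> V" "independent B" "V \<subseteq> span B"
    using maximal_independent_subset_extend[of B0 V] B0 by blast
  have finB: "finite B"
    using independent_span_bound[OF V(3) B(3)] B(2) V(2) by blast
  have L0: "L 0 = 0" using L(2)[of 0 0] by simp
  have Ldiff: "L (x - y) = L x - L y" for x y
    using L(1)[of "x - y" y] by simp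
  have dK: "dim ?K = card B0" using basis_card_eq_dim[OF B0(1) B0(3) B0(2)] by simp
  have dV: "dim V = card B" using basis_card_eq_dim[OF B(2) B(4) B(3)] by simp
  let ?C = "B - B0"
  have key: False if c: "c \<in> ?C" and y: "y \<in> span (?C - {c})" and eq: "L c = L y" for c y
  proof -
    have cV: "c \<in> V" using c B(2) by blast
    have s1: "span (?C - {c}) \<subseteq> span V" using B(2) by (intro span_mono) blast
    have "c - y \<in> span V"
      using span_diff[OF span_base[OF cV]] y s1 by blast
    moreover have "span V = V" using V(1) by simp
    ultimately have "c - y \<in> V" by simp
    moreover have "L (c - y) = 0" using eq Ldiff by simp
    ultimately have "c - y \<in> span B0" using B0(3) by blast
    moreover have "span B0 \<subseteq> span (B - {c})" using c B(1) by (intro span_mono) blast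
    ultimately have h1: "c - y \<in> span (B - {c})" by blast
    have "span (?C - {c}) \<subseteq> span (B - {c})" by (intro span_mono) blast
    hence h2: "y \<in> span (B - {c})" using y by blast
    have "c = (c - y) + y" by simp
    hence "c \<in> span (B - {c})" using span_add[OF h1 h2] by simp
    thus False using B(3) c unfolding dependent_def by blast
  qed
  have inj: "inj_on L ?C"
  proof (rule inj_onI)
    fix a b assume a: "a \<in> ?C" and b: "b \<in> ?C" and e: "L a = L b"
    show "a = b"
    proof (rule ccontr)
      assume "a \<noteq> b"
      hence "b \<in> span (?C - {a})" using b by (simp add: span_base)
      thus False using key[OF a _ e] by blast
    qed
  qed
  have indep: "independent (L ` ?C)"
  proof
    assume "dependent (L ` ?C)"
    then obtain c where c: "c \<in> ?C" and cs: "L c \<in> span (L ` ?C - {L c})"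
      unfolding dependent_def by blast
    have "L ` ?C - {L c} = L ` (?C - {c})" using inj c by (auto simp: inj_on_def)
    hence "L c \<in> L ` span (?C - {c})" using cs span_image_lin[OF L] by simp
    then obtain y where "y \<in> span (?C - {c})" "L c = L y" by blast
    thus False using key c by blast
  qed
  have sp: "L ` V \<subseteq> span (L ` ?C)"
  proof
    fix v assume "v \<in> L ` V"
    then obtain x where x: "x \<in> V" "v = L x" by blast
    have "x \<in> span B" using x B(4) by blast
    hence "L x \<in> span (L ` B)" using span_image_lin[OF L] by blast
    moreover have "L ` B \<subseteq> insert 0 (L ` ?C)"
      using B0(1) by auto
    ultimately show "v \<in> span (L ` ?C)" using x
      by (metis span_insert_0 span_mono subsetD)
  qed
  have sub: "L ` ?C \<subseteq> L ` V" using B(2) by blast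
  have "dim (L ` V) = card (L ` ?C)" using basis_card_eq_dim[OF sub sp indep] by simp
  also have "\<dots> = card ?C" using card_image[OF inj] .
  also have "\<dots> = card B - card B0" using B(1) finB by (meson card_Diff_subset finite_subset)
  finally show ?thesis using dK dV
    by (metis B(1) add_diff_inverse_nat card_mono finB not_less)
qed

end

lemma sum_fun_apply: "(\<Sum>x\<in>A. f x) c = (\<Sum>x\<in>A. (f x :: 'b \<Rightarrow> 'c::comm_monoid_add) c)"
  by (induction A rule: infinite_finite_induct) auto

lemma pscale_apply[simp]: "pscale a f c = a * f c" by (simp add: pscale_def)

lemma rowcol:
  fixes P :: "mono \<Rightarrow> mono \<Rightarrow> 'a::field"
  assumes M: "finite M" and N: "finite N"
  shows "pv.dim ((\<lambda>m. \<lambda>c. if c \<in> N then P m c else 0) ` M)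
         \<le> pv.dim ((\<lambda>n. \<lambda>c. if c \<in> M then P c n else 0) ` N)"
proof -
  define col where "col n = (\<lambda>c. if c \<in> M then P c n else 0)" for n
  define row where "row m = (\<lambda>c. if c \<in> N then P m c else 0)" for m
  obtain Bc where Bc: "Bc \<subseteq> col ` N" "pv.independent Bc" "col ` N \<subseteq> pv.span Bc"
    using pv.maximal_independent_subset[of "col ` N"] by blast
  have finBc: "finite Bc" using Bc(1) N finite_subset by blast
  have cardBc: "card Bc = pv.dim (col ` N)"
    using pv.basis_card_eq_dim[OF Bc(1) Bc(3) Bc(2)] .
  have "\<forall>n\<in>N. \<exists>u. col n = (\<Sum>v\<in>Bc. pscale (u v) v)"
  proof
    fix n assume "n \<in> N"
    hence "col n \<in> pv.span Bc" using Bc(3) by blast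
    thus "\<exists>u. col n = (\<Sum>v\<in>Bc. pscale (u v) v)"
      using pv.span_finite[OF finBc] by auto
  qed
  then obtain U where U: "\<And>n. n \<in> N \<Longrightarrow> col n = (\<Sum>v\<in>Bc. pscale (U n v) v)"
    by metis
  define R where "R v = (\<lambda>c. if c \<in> N then U c v else 0)" for v
  have rowin: "row m \<in> pv.span (R ` Bc)" if m: "m \<in> M" for m
  proof -
    have "row m = (\<Sum>v\<in>Bc. pscale (v m) (R v))"
    proof
      fix c
      show "row m c = (\<Sum>v\<in>Bc. pscale (v m) (R v)) c"
      proof (cases "c \<in> N")
        case True
        have "row m c = col c m" using m True by (simp add: row_def col_def)
        also have "\<dots> = (\<Sum>v\<in>Bc. U c v * v m)" using U[OF True] by (simp add: sum_fun_apply)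
        also have "\<dots> = (\<Sum>v\<in>Bc. pscale (v m) (R v)) c"
          using True by (simp add: sum_fun_apply R_def mult.commute)
        finally show ?thesis .
      next
        case False
        thus ?thesis by (simp add: sum_fun_apply R_def row_def)
      qed
    qed
    also have "\<dots> \<in> pv.span (R ` Bc)"
      by (intro pv.span_sum pv.span_scale pv.span_base) auto
    finally show ?thesis .
  qed
  have "pv.dim (row ` M) \<le> card (R ` Bc)"
    using rowin finBc by (intro pv.dim_le_card) auto
  also have "\<dots> \<le> card Bc" using finBc card_image_le by blast
  finally show ?thesis using cardBc by (simp add: row_def col_def)
qed

definition Mon :: "bool \<Rightarrow> nat \<Rightarrow> mono set" where
  "Mon fl i = {m. mdeg m = i \<and> (fl \<longrightarrow> m vw = 0)}"
definition Vs :: "bool \<Rightarrow> nat \<Rightarrow> ('a::zero) pol set" where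
  "Vs fl i = {f. finite (supp f) \<and> homog i f \<and> (fl \<longrightarrow> no_w f)}"
definition Sset :: "bool \<Rightarrow> ('a::zero) pol set" where
  "Sset fl = (if fl then polys' else polys)"
definition cat :: "('a::comm_ring_1) pol \<Rightarrow> mono set \<Rightarrow> 'a pol \<Rightarrow> 'a pol" where
  "cat \<Phi> M f = (\<lambda>c. \<Sum>m\<in>M. f m * \<Phi> (madd m c))"

lemma mono_expv: "m = expv (m vw) (m vx) (m vy) (m vz)"
  by (rule ext, case_tac x) (auto simp: expv_def)

lemma mono_eqI: "m vw = m' vw \<Longrightarrow> m vx = m' vx \<Longrightarrow> m vy = m' vy \<Longrightarrow> m vz = m' vz \<Longrightarrow> m = m'"
  by (rule ext, case_tac x) auto

lemma mdeg_madd[simp]: "mdeg (madd a b) = mdeg a + mdeg b"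
  by (simp add: mdeg_def madd_def)

lemma madd_comm: "madd a b = madd b a" by (simp add: madd_def add.commute)

lemma madd_apply[simp]: "madd a b v = a v + b v" by (simp add: madd_def)

lemma expv_apply[simp]: "expv a b c d vw = a" "expv a b c d vx = b" "expv a b c d vy = c" "expv a b c d vz = d"
  by (simp_all add: expv_def)

lemma mdeg_expv[simp]: "mdeg (expv a b c d) = a + b + c + d" by (simp add: mdeg_def)

lemma finite_Mon: "finite (Mon fl i)"
proof -
  have "Mon fl i \<subseteq> (\<lambda>(a,b,c,d). expv a b c d) ` ({0..i} \<times> {0..i} \<times> {0..i} \<times> {0..i})"
  proof
    fix m assume "m \<in> Mon fl i"
    hence "mdeg m = i" by (simp add: Mon_def)
    hence "m vw \<le> i" "m vx \<le> i" "m vy \<le> i" "m vz \<le> i" by (auto simp: mdeg_def)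
    thus "m \<in> (\<lambda>(a,b,c,d). expv a b c d) ` ({0..i} \<times> {0..i} \<times> {0..i} \<times> {0..i})"
      by (intro image_eqI[of _ _ "(m vw, m vx, m vy, m vz)"]) (auto intro: mono_expv)
  qed
  thus ?thesis by (rule finite_subset) auto
qed

lemma Vs_eq: "{f \<in> Sset fl. homog i f} = Vs fl i"
  by (auto simp: Sset_def Vs_def polys'_def polys_def)

lemma supp_sub_Mon: "f \<in> Vs fl i \<Longrightarrow> supp f \<subseteq> Mon fl i"
  by (auto simp: Vs_def supp_def Mon_def homog_def no_w_def)

lemma supp_add: "supp (f + g :: ('a::monoid_add) pol) \<subseteq> supp f \<union> supp g"
  by (auto simp: supp_def)

lemma nz_add: "(a::'a::monoid_add) + b \<noteq> 0 \<Longrightarrow> a \<noteq> 0 \<or> b \<noteq> 0" by auto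

lemma subspace_Vs: "pv.subspace (Vs fl i :: 'a::field pol set)"
  unfolding pv.subspace_def
proof (intro conjI ballI allI)
  show "0 \<in> (Vs fl i :: 'a pol set)" by (simp add: Vs_def supp_def homog_def no_w_def)
next
  fix x y :: "'a pol" assume "x \<in> Vs fl i" "y \<in> Vs fl i"
  thus "x + y \<in> Vs fl i"
    using supp_add[of x y] by (auto simp: Vs_def homog_def no_w_def intro: finite_subset dest!: nz_add)
next
  fix c :: 'a and x :: "'a pol" assume "x \<in> Vs fl i"
  moreover have "supp (pscale c x) \<subseteq> supp x" by (auto simp: supp_def)
  ultimately show "pscale c x \<in> Vs fl i"
    by (auto simp: Vs_def homog_def no_w_def intro: finite_subset)
qed

lemma monom1_apply: "monom1 e m = (if m = e then 1 else 0)" by (simp add: monom1_def)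

lemma monom_in_Vs: "m \<in> Mon fl i \<Longrightarrow> (monom1 m :: 'a::field pol) \<in> Vs fl i"
proof -
  assume m: "m \<in> Mon fl i"
  have "supp (monom1 m :: 'a pol) \<subseteq> {m}" by (auto simp: supp_def monom1_def)
  thus ?thesis using m by (auto simp: Vs_def homog_def no_w_def monom1_def Mon_def intro: finite_subset)
qed

lemma pol_expand: "f \<in> Vs fl i \<Longrightarrow> f = (\<Sum>m\<in>Mon fl i. pscale (f m) (monom1 m :: 'a::field pol))"
proof
  fix c assume f: "f \<in> Vs fl i"
  have "(\<Sum>m\<in>Mon fl i. pscale (f m) (monom1 m :: 'a pol)) c = (\<Sum>m\<in>Mon fl i. if m = c then f m else 0)"
    unfolding sum_fun_apply pscale_apply
    by (intro sum.cong refl) (auto simp: monom1_def)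
  also have "\<dots> = (if c \<in> Mon fl i then f c else 0)" using finite_Mon by (simp add: sum.delta')
  also have "\<dots> = f c" using supp_sub_Mon[OF f] by (auto simp: supp_def)
  finally show "f c = (\<Sum>m\<in>Mon fl i. pscale (f m) (monom1 m :: 'a pol)) c" ..
qed

lemma Vs_span: "Vs fl i = pv.span (monom1 ` Mon fl i :: 'a::field pol set)"
proof
  show "Vs fl i \<subseteq> pv.span (monom1 ` Mon fl i :: 'a pol set)"
  proof
    fix f :: "'a pol" assume f: "f \<in> Vs fl i"
    have "(\<Sum>m\<in>Mon fl i. pscale (f m) (monom1 m :: 'a pol)) \<in> pv.span (monom1 ` Mon fl i)"
      by (intro pv.span_sum pv.span_scale pv.span_base) auto
    thus "f \<in> pv.span (monom1 ` Mon fl i)" using pol_expand[OF f] by simp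
  qed
next
  show "pv.span (monom1 ` Mon fl i :: 'a pol set) \<subseteq> Vs fl i"
    using subspace_Vs monom_in_Vs by (intro pv.span_minimal) auto
qed

lemma cat_add: "cat \<Phi> M (f + g) = cat \<Phi> M f + cat \<Phi> M g"
  by (auto simp: cat_def fun_eq_iff algebra_simps sum.distrib)

lemma cat_scale: "cat \<Phi> M (pscale a f) = pscale a (cat \<Phi> M f)"
  by (auto simp: cat_def fun_eq_iff algebra_simps sum_distrib_left)

lemma cat_contract: "f \<in> Vs fl i \<Longrightarrow> contract f \<Phi> = cat \<Phi> (Mon fl i) f"
  unfolding contract_def cat_def
  by (rule ext, rule sum.mono_neutral_left[OF finite_Mon supp_sub_Mon]) (auto simp: supp_def)

lemma cat_monom: assumes "m \<in> M" "finite M" shows "cat \<Phi> M (monom1 m) = (\<lambda>c. \<Phi> (madd m c))"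
proof
  fix c
  have "cat \<Phi> M (monom1 m) c = (\<Sum>n\<in>M. if n = m then \<Phi> (madd m c) else 0)"
    unfolding cat_def by (intro sum.cong refl) (auto simp: monom1_def)
  also have "\<dots> = \<Phi> (madd m c)" using \<open>m \<in> M\<close> \<open>finite M\<close> by (simp add: sum.delta)
  finally show "cat \<Phi> M (monom1 m) c = \<Phi> (madd m c)" .
qed

lemma HF:
  fixes \<Phi> :: "'a::field pol"
  assumes Q: "Q \<inter> Sset fl = Ann \<Phi> \<inter> Sset fl"
  shows "hilb (Sset fl) Q i = pv.dim (cat \<Phi> (Mon fl i) ` Vs fl i)"
proof -
  have K1: "{f \<in> Q \<inter> Sset fl. homog i f} = {f \<in> {g \<in> Sset fl. homog i g}. contract f \<Phi> = 0}"
    using Q by (auto simp: Ann_def zero_fun_def Sset_def polys'_def split: if_splits)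
  have K: "{f \<in> Q \<inter> Sset fl. homog i f} = {f \<in> Vs fl i. cat \<Phi> (Mon fl i) f = 0}"
    unfolding K1 Vs_eq using cat_contract[of _ fl i \<Phi>] by auto
  have "pv.dim (Vs fl i :: 'a pol set) = pv.dim {f \<in> Vs fl i. cat \<Phi> (Mon fl i) f = 0} + pv.dim (cat \<Phi> (Mon fl i) ` Vs fl i)"
    by (rule pv.rank_nullity_sub[OF cat_add cat_scale subspace_Vs])
       (auto simp: Vs_span[of fl i] finite_Mon)
  thus ?thesis unfolding hilb_def Vs_eq K by simp
qed

lemma cat_image: "cat \<Phi> (Mon fl i) ` Vs fl i = pv.span ((\<lambda>m c. \<Phi> (madd m c)) ` Mon fl i :: 'a::field pol set)"
proof -
  have "cat \<Phi> (Mon fl i) ` Vs fl i = pv.span (cat \<Phi> (Mon fl i) ` monom1 ` Mon fl i)"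
    unfolding Vs_span by (rule pv.span_image_lin[OF cat_add cat_scale])
  also have "cat \<Phi> (Mon fl i) ` monom1 ` Mon fl i = (\<lambda>m c. \<Phi> (madd m c)) ` Mon fl i"
    unfolding image_image by (intro image_cong refl cat_monom finite_Mon)
  finally show ?thesis .
qed

lemma HF_rows:
  fixes \<Phi> :: "'a::field pol"
  assumes Q: "Q \<inter> Sset fl = Ann \<Phi> \<inter> Sset fl"
  shows "hilb (Sset fl) Q i = pv.dim ((\<lambda>m c. \<Phi> (madd m c)) ` Mon fl i)"
  unfolding HF[OF Q] cat_image pv.dim_span ..

lemma sym_rows:
  fixes \<Phi> :: "'a::field pol"
  assumes H: "homog j \<Phi>" and W: "fl \<longrightarrow> no_w \<Phi>" and ij: "i \<le> j"
  shows "pv.dim ((\<lambda>m c. \<Phi> (madd m c)) ` Mon fl i) = pv.dim ((\<lambda>m c. \<Phi> (madd m c)) ` Mon fl (j - i))"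
proof -
  have row: "(\<lambda>c. \<Phi> (madd m c)) = (\<lambda>c. if c \<in> Mon fl k then \<Phi> (madd m c) else 0)"
    if "m \<in> Mon fl i'" "i' + k = j" for m i' k
  proof
    fix c
    show "\<Phi> (madd m c) = (if c \<in> Mon fl k then \<Phi> (madd m c) else 0)"
    proof (cases "\<Phi> (madd m c) = 0")
      case False
      hence "mdeg (madd m c) = j" "fl \<longrightarrow> (madd m c) vw = 0"
        using H W by (auto simp: homog_def no_w_def)
      thus ?thesis using that by (auto simp: Mon_def)
    qed simp
  qed
  have e1: "(\<lambda>m c. \<Phi> (madd m c)) ` Mon fl i = (\<lambda>m c. if c \<in> Mon fl (j-i) then \<Phi> (madd m c) else 0) ` Mon fl i"
    using row[of _ i "j-i"] ij by (intro image_cong) auto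
  have e2: "(\<lambda>m c. \<Phi> (madd m c)) ` Mon fl (j-i) = (\<lambda>n c. if c \<in> Mon fl i then \<Phi> (madd c n) else 0) ` Mon fl (j-i)"
    using row[of _ "j-i" i] ij by (intro image_cong) (auto simp: madd_comm)
  have e3: "(\<lambda>m c. \<Phi> (madd m c)) ` Mon fl (j-i) = (\<lambda>m c. if c \<in> Mon fl i then \<Phi> (madd m c) else 0) ` Mon fl (j-i)"
    using row[of _ "j-i" i] ij by (intro image_cong) auto
  have e4: "(\<lambda>m c. \<Phi> (madd m c)) ` Mon fl i = (\<lambda>n c. if c \<in> Mon fl (j-i) then \<Phi> (madd c n) else 0) ` Mon fl i"
    using row[of _ i "j-i"] ij by (intro image_cong) (auto simp: madd_comm)
  show ?thesis
    using rowcol[where M="Mon fl i" and N="Mon fl (j-i)" and P="\<lambda>m c. \<Phi> (madd m c)", OF finite_Mon finite_Mon]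
          rowcol[where N="Mon fl i" and M="Mon fl (j-i)" and P="\<lambda>m c. \<Phi> (madd m c)", OF finite_Mon finite_Mon]
    unfolding e1[symmetric] e2[symmetric] e3[symmetric] e4[symmetric] by simp
qed

lemma case_count:
  fixes L :: "'a::field pol \<Rightarrow> 'a pol" and \<phi> :: "'a pol \<Rightarrow> 'a"
  assumes La: "\<And>x y. L (x+y) = L x + L y" and Ls: "\<And>c x. L (pscale c x) = pscale c (L x)"
    and pa: "\<And>x y. \<phi> (x+y) = \<phi> x + \<phi> y" and ps: "\<And>c x. \<phi> (pscale c x) = c * \<phi> x"
    and V: "pv.subspace V"
  shows "(if Z \<in> L ` V then 0 else 1) + (if \<exists>g\<in>V. \<exists>s. L g + pscale s Z = 0 \<and> \<phi> g \<noteq> 0 then 1 else 0)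
       = (if \<exists>g\<in>V. L g = 0 \<and> \<phi> g \<noteq> 0 then 1 else 0) + (if \<exists>g\<in>V. \<phi> g = 0 \<and> L g = Z then 0 else (1::nat))"
proof -
  have Ld: "L (x - y) = L x - L y" for x y using La[of "x - y" y] by simp
  have pd: "\<phi> (x - y) = \<phi> x - \<phi> y" for x y using pa[of "x - y" y] by simp
  have L0: "L 0 = 0" using Ls[of 0 0] by (simp add: pscale_def zero_fun_def)
  have sc: "pscale c x \<in> V" if "x \<in> V" for c x using pv.subspace_scale[OF V that] .
  have df: "x - y \<in> V" if "x \<in> V" "y \<in> V" for x y using pv.subspace_diff[OF V that] .
  have ad: "x + y \<in> V" if "x \<in> V" "y \<in> V" for x y using pv.subspace_add[OF V that] .
  show ?thesis
  proof (cases "\<exists>g\<in>V. L g = 0 \<and> \<phi> g \<noteq> 0")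
    case True
    then obtain g0 where g0: "g0 \<in> V" "L g0 = 0" "\<phi> g0 \<noteq> 0" by blast
    have ex: "\<exists>g\<in>V. \<exists>s. L g + pscale s Z = 0 \<and> \<phi> g \<noteq> 0"
      using g0 by (intro bexI[of _ g0] exI[of _ 0]) (auto simp: pscale_def zero_fun_def)
    have "(Z \<in> L ` V) = (\<exists>g\<in>V. \<phi> g = 0 \<and> L g = Z)"
    proof
      assume "Z \<in> L ` V"
      then obtain g1 where g1: "g1 \<in> V" "Z = L g1" by blast
      let ?g = "g1 - pscale (\<phi> g1 / \<phi> g0) g0"
      have "?g \<in> V" using g1 g0 by (intro df sc)
      moreover have "\<phi> ?g = 0" using g0 by (simp add: pd ps)
      moreover have "L ?g = L g1 - pscale (\<phi> g1 / \<phi> g0) (L g0)" by (simp only: Ld Ls)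
      hence "L ?g = Z" using g0 g1 by (simp add: pscale_def zero_fun_def)
      ultimately show "\<exists>g\<in>V. \<phi> g = 0 \<and> L g = Z" by blast
    qed auto
    thus ?thesis using True ex by auto
  next
    case False
    note nA = False
    show ?thesis
    proof (cases "Z \<in> L ` V")
      case True
      then obtain g1 where g1: "g1 \<in> V" "Z = L g1" by blast
      show ?thesis
      proof (cases "\<phi> g1 = 0")
        case True
        have "\<not> (\<exists>g\<in>V. \<exists>s. L g + pscale s Z = 0 \<and> \<phi> g \<noteq> 0)"
        proof
          assume "\<exists>g\<in>V. \<exists>s. L g + pscale s Z = 0 \<and> \<phi> g \<noteq> 0"
          then obtain g s where gs: "g \<in> V" "L g + pscale s Z = 0" "\<phi> g \<noteq> 0" by blast
          have "g + pscale s g1 \<in> V" using gs g1 by (intro ad sc)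
          moreover have "L (g + pscale s g1) = 0" using gs g1 by (simp add: La Ls)
          moreover have "\<phi> (g + pscale s g1) \<noteq> 0" using gs True by (simp add: pa ps)
          ultimately show False using nA by blast
        qed
        thus ?thesis using nA g1 True by auto
      next
        case False
        have ex: "\<exists>g\<in>V. \<exists>s. L g + pscale s Z = 0 \<and> \<phi> g \<noteq> 0"
          using g1 False by (intro bexI[of _ g1] exI[of _ "-1"]) (auto simp: pscale_def zero_fun_def)
        have "\<not> (\<exists>g\<in>V. \<phi> g = 0 \<and> L g = Z)"
        proof
          assume "\<exists>g\<in>V. \<phi> g = 0 \<and> L g = Z"
          then obtain g2 where g2: "g2 \<in> V" "\<phi> g2 = 0" "L g2 = Z" by blast
          have "g1 - g2 \<in> V" using g1 g2 by (intro df)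
          moreover have "L (g1 - g2) = 0" using g1 g2 by (simp add: Ld)
          moreover have "\<phi> (g1 - g2) \<noteq> 0" using g2 False by (simp add: pd)
          ultimately show False using nA by blast
        qed
        thus ?thesis using nA True ex by auto
      qed
    next
      case False
      note nZ = False
      have "\<not> (\<exists>g\<in>V. \<exists>s. L g + pscale s Z = 0 \<and> \<phi> g \<noteq> 0)"
      proof
        assume "\<exists>g\<in>V. \<exists>s. L g + pscale s Z = 0 \<and> \<phi> g \<noteq> 0"
        then obtain g s where gs: "g \<in> V" "L g + pscale s Z = 0" "\<phi> g \<noteq> 0" by blast
        show False
        proof (cases "s = 0")
          case True
          hence "L g = 0" using gs by (simp add: pscale_def zero_fun_def)
          thus False using gs nA by blast
        next
          case False
          have "pscale (- 1 / s) g \<in> V" using gs by (intro sc)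
          moreover have "L (pscale (- 1 / s) g) = Z"
          proof -
            have "L g = - pscale s Z" using gs(2) by (simp add: eq_neg_iff_add_eq_0)
            moreover have "L (pscale (- 1 / s) g) = pscale (- 1 / s) (L g)" by (rule Ls)
            ultimately show ?thesis using False by (simp add: pscale_def fun_eq_iff)
          qed
          ultimately show False using nZ by blast
        qed
      qed
      moreover have "\<not> (\<exists>g\<in>V. \<phi> g = 0 \<and> L g = Z)" using nZ by blast
      ultimately show ?thesis using nA nZ by auto
    qed
  qed
qed

definition p0 :: "('a::zero) pol \<Rightarrow> 'a pol" where
  "p0 h = (\<lambda>c. if c vw = 0 then h c else 0)"

lemma mono_eq_iff: "m = m' \<longleftrightarrow> m vw = m' vw \<and> m vx = m' vx \<and> m vy = m' vy \<and> m vz = m' vz"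
  using mono_eqI by auto

lemma madd_e:
  assumes "mdeg m = i" "1 \<le> i" "i \<le> j - 1"
  shows "(madd m c = expv 1 0 0 (j-1)) \<longleftrightarrow>
     (m = expv 0 0 0 i \<and> c = expv 1 0 0 (j-1-i)) \<or> (m = expv 1 0 0 (i-1) \<and> c = expv 0 0 0 (j-i))"
  using assms unfolding mono_eq_iff[of "madd m c"] mono_eq_iff[of m] mono_eq_iff[of c]
  by (simp add: mdeg_def) arith

lemma p0_Vs: "f \<in> Vs False i \<Longrightarrow> p0 f \<in> Vs True i"
proof -
  assume f: "f \<in> Vs False i"
  have "supp (p0 f) \<subseteq> supp f" by (auto simp: supp_def p0_def)
  thus ?thesis using f by (auto simp: Vs_def homog_def no_w_def p0_def intro: finite_subset)
qed

lemma Vs_TF: "f \<in> Vs True i \<Longrightarrow> f \<in> Vs False i" by (simp add: Vs_def)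

lemma catF:
  fixes G :: "'a::field pol"
  assumes G: "homog j G" "no_w G" and f: "f \<in> Vs False i" and i: "1 \<le> i" "i \<le> j - 1"
  shows "cat (\<lambda>m. G m + monom1 (expv 1 0 0 (j-1)) m) (Mon False i) f
     = cat G (Mon True i) (p0 f) + pscale (f (expv 0 0 0 i)) (monom1 (expv 1 0 0 (j-1-i)))
       + pscale (f (expv 1 0 0 (i-1))) (monom1 (expv 0 0 0 (j-i)))"
proof
  fix c
  let ?e = "expv 1 0 0 (j-1)" and ?z = "expv 0 0 0 i" and ?w = "expv 1 0 0 (i-1)"
  have zin: "?z \<in> Mon False i" and win: "?w \<in> Mon False i" using i by (auto simp: Mon_def)
  have zw: "?z \<noteq> ?w" by (simp add: mono_eq_iff)
  have p1: "(\<Sum>m\<in>Mon False i. f m * G (madd m c)) = (\<Sum>m\<in>Mon True i. p0 f m * G (madd m c))"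
  proof (rule sum.mono_neutral_cong_right[OF finite_Mon])
    show "Mon True i \<subseteq> Mon False i" by (auto simp: Mon_def)
    show "\<forall>m\<in>Mon False i - Mon True i. f m * G (madd m c) = 0"
      using G(2) by (auto simp: Mon_def no_w_def)
    show "\<And>m. m \<in> Mon True i \<Longrightarrow> f m * G (madd m c) = p0 f m * G (madd m c)"
      by (auto simp: Mon_def p0_def)
  qed
  have t: "f m * monom1 ?e (madd m c) = (if m = ?z then f m * monom1 (expv 1 0 0 (j-1-i)) c else 0)
        + (if m = ?w then f m * monom1 (expv 0 0 0 (j-i)) c else 0)" if m: "m \<in> Mon False i" for m
  proof -
    have md: "mdeg m = i" using m by (simp add: Mon_def)
    show ?thesis using madd_e[OF md i, of c] zw unfolding monom1_apply by auto
  qed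
  have p2: "(\<Sum>m\<in>Mon False i. f m * monom1 ?e (madd m c))
     = f ?z * monom1 (expv 1 0 0 (j-1-i)) c + f ?w * monom1 (expv 0 0 0 (j-i)) c"
  proof -
    have "(\<Sum>m\<in>Mon False i. f m * monom1 ?e (madd m c)) = (\<Sum>m\<in>Mon False i. (if m = ?z then f m * monom1 (expv 1 0 0 (j-1-i)) c else 0)
        + (if m = ?w then f m * monom1 (expv 0 0 0 (j-i)) c else 0))" by (rule sum.cong[OF refl t])
    also have "\<dots> = (\<Sum>m\<in>Mon False i. (if m = ?z then f m * monom1 (expv 1 0 0 (j-1-i)) c else 0))
        + (\<Sum>m\<in>Mon False i. (if m = ?w then f m * monom1 (expv 0 0 0 (j-i)) c else 0))" by (rule sum.distrib)
    also have "\<dots> = f ?z * monom1 (expv 1 0 0 (j-1-i)) c + f ?w * monom1 (expv 0 0 0 (j-i)) c"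
      by (simp only: sum.delta[OF finite_Mon] zin win if_True)
    finally show ?thesis .
  qed
  have "cat (\<lambda>m. G m + monom1 ?e m) (Mon False i) f c
      = (\<Sum>m\<in>Mon False i. f m * G (madd m c)) + (\<Sum>m\<in>Mon False i. f m * monom1 ?e (madd m c))"
    by (simp add: cat_def distrib_left sum.distrib)
  also have "\<dots> = (cat G (Mon True i) (p0 f) + pscale (f ?z) (monom1 (expv 1 0 0 (j-1-i)))
       + pscale (f ?w) (monom1 (expv 0 0 0 (j-i)))) c"
    unfolding p1 p2 by (simp add: cat_def add.assoc)
  finally show "cat (\<lambda>m. G m + monom1 ?e m) (Mon False i) f c = (cat G (Mon True i) (p0 f) + pscale (f ?z) (monom1 (expv 1 0 0 (j-1-i)))
       + pscale (f ?w) (monom1 (expv 0 0 0 (j-i)))) c" .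
qed

lemma p0_add: "p0 (x + y) = p0 x + p0 (y :: 'a::monoid_add pol)" by (auto simp: p0_def fun_eq_iff)
lemma p0_scale: "p0 (pscale c x) = pscale c (p0 (x :: 'a::field pol))" by (auto simp: p0_def fun_eq_iff)

lemma T_eq:
  fixes G :: "'a::field pol"
  assumes G: "homog j G" "no_w G" and i: "1 \<le> i" "i \<le> j - 1"
  shows "cat (\<lambda>m. G m + monom1 (expv 1 0 0 (j-1)) m) (Mon False i) ` Vs False i
    = {cat G (Mon True i) g + pscale (g (expv 0 0 0 i)) (monom1 (expv 1 0 0 (j-1-i)))
       + pscale s (monom1 (expv 0 0 0 (j-i))) | g s. g \<in> Vs True i}"
    (is "?L = ?R")
proof
  show "?L \<subseteq> ?R"
  proof
    fix t assume "t \<in> ?L"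
    then obtain f where f: "f \<in> Vs False i" "t = cat (\<lambda>m. G m + monom1 (expv 1 0 0 (j-1)) m) (Mon False i) f" by blast
    have eq: "p0 f (expv 0 0 0 i) = f (expv 0 0 0 i)" by (simp add: p0_def)
    have "t = cat G (Mon True i) (p0 f) + pscale (p0 f (expv 0 0 0 i)) (monom1 (expv 1 0 0 (j-1-i)))
       + pscale (f (expv 1 0 0 (i-1))) (monom1 (expv 0 0 0 (j-i)))"
      unfolding f(2) catF[OF G f(1) i] eq ..
    thus "t \<in> ?R" using p0_Vs[OF f(1)] by blast
  qed
next
  show "?R \<subseteq> ?L"
  proof
    fix t assume "t \<in> ?R"
    then obtain g s where gs: "g \<in> Vs True i" "t = cat G (Mon True i) g + pscale (g (expv 0 0 0 i)) (monom1 (expv 1 0 0 (j-1-i)))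
       + pscale s (monom1 (expv 0 0 0 (j-i)))" by blast
    let ?w = "expv 1 0 0 (i-1)"
    have win: "?w \<in> Mon False i" using i by (auto simp: Mon_def)
    define f where "f = g + pscale s (monom1 ?w)"
    have fV: "f \<in> Vs False i" unfolding f_def
      by (intro pv.subspace_add[OF subspace_Vs] Vs_TF gs(1) pv.subspace_scale[OF subspace_Vs] monom_in_Vs win)
    have gw: "g c = 0" if "c vw \<noteq> 0" for c using gs(1) that by (auto simp: Vs_def no_w_def)
    have "p0 f = g" using gw by (auto simp: p0_def f_def fun_eq_iff monom1_def)
    moreover have "f (expv 0 0 0 i) = g (expv 0 0 0 i)" by (simp add: f_def monom1_def mono_eq_iff)
    moreover have "f ?w = s" using gw[of ?w] by (simp add: f_def monom1_def)
    ultimately have "cat (\<lambda>m. G m + monom1 (expv 1 0 0 (j-1)) m) (Mon False i) f = t"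
      unfolding catF[OF G fV i] gs(2) by simp
    thus "t \<in> ?L" using fV by blast
  qed
qed

lemma p0_cat: assumes "no_w G" shows "p0 (cat G (Mon True i) g) = cat G (Mon True i) g"
proof -
  have z: "G (madd m c) = 0" if "c vw \<noteq> 0" for m c using assms that by (auto simp: no_w_def)
  show ?thesis by (auto simp: p0_def cat_def fun_eq_iff z)
qed

lemma dimT:
  fixes G :: "'a::field pol"
  assumes G: "homog j G" "no_w G" and i: "1 \<le> i" "i \<le> j - 1"
  shows "hilb polys (Ann (\<lambda>m. G m + monom1 (expv 1 0 0 (j-1)) m)) i
     = hilb polys' (Ann G \<inter> polys') i
       + (if monom1 (expv 0 0 0 (j-i)) \<in> cat G (Mon True i) ` Vs True i then 0 else 1)
       + (if \<exists>g\<in>Vs True i. \<exists>s. cat G (Mon True i) g + pscale s (monom1 (expv 0 0 0 (j-i))) = 0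
               \<and> g (expv 0 0 0 i) \<noteq> 0 then 1 else 0)"
proof -
  define F where "F = (\<lambda>m. G m + monom1 (expv 1 0 0 (j-1)) m)"
  define L where "L = cat G (Mon True i)"
  define A where "A = L ` Vs True i"
  define EE :: "'a pol" where "EE = monom1 (expv 1 0 0 (j-1-i))"
  define ZZ :: "'a pol" where "ZZ = monom1 (expv 0 0 0 (j-i))"
  define z where "z = expv 0 0 0 i"
  define T where "T = cat F (Mon False i) ` Vs False i"
  define Ex where "Ex = (\<exists>g\<in>Vs True i. \<exists>s. L g + pscale s ZZ = 0 \<and> g z \<noteq> 0)"
  have hF: "hilb polys (Ann F) i = pv.dim T"
    using HF[of "Ann F" False F i] by (simp add: Sset_def T_def)
  have hG: "hilb polys' (Ann G \<inter> polys') i = pv.dim A"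
    using HF[of "Ann G \<inter> polys'" True G i] by (simp add: Sset_def A_def L_def)
  have Teq: "T = {L g + pscale (g z) EE + pscale s ZZ | g s. g \<in> Vs True i}"
    unfolding T_def F_def L_def EE_def ZZ_def z_def by (rule T_eq[OF G i])
  have Tspan: "T = pv.span ((\<lambda>m c. F (madd m c)) ` Mon False i)"
    unfolding T_def by (rule cat_image)
  have Aspan: "A = pv.span ((\<lambda>m c. G (madd m c)) ` Mon True i)"
    unfolding A_def L_def by (rule cat_image)
  have Lp0: "p0 (L g) = L g" for g unfolding L_def by (rule p0_cat[OF G(2)])
  have p0E: "p0 EE = 0" by (auto simp: p0_def EE_def monom1_def fun_eq_iff)
  have p0Z: "p0 ZZ = ZZ" by (auto simp: p0_def ZZ_def monom1_def fun_eq_iff)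
  have rn: "pv.dim T = pv.dim {t\<in>T. p0 t = 0} + pv.dim (p0 ` T)"
    by (rule pv.rank_nullity_sub[OF p0_add p0_scale, of T "(\<lambda>m c. F (madd m c)) ` Mon False i"])
       (auto simp: Tspan finite_Mon)
  have p0t: "p0 (L g + pscale a EE + pscale s ZZ) = L g + pscale s ZZ" for g a s
    by (simp only: p0_add p0_scale Lp0 p0E p0Z) (simp add: pscale_def zero_fun_def)
  have p0T: "p0 ` T = {L g + pscale s ZZ | g s. g \<in> Vs True i}"
  proof (rule set_eqI)
    fix x
    show "x \<in> p0 ` T \<longleftrightarrow> x \<in> {L g + pscale s ZZ | g s. g \<in> Vs True i}"
    proof
      assume "x \<in> p0 ` T"
      then obtain g s where "g \<in> Vs True i" "x = p0 (L g + pscale (g z) EE + pscale s ZZ)"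
        unfolding Teq by blast
      thus "x \<in> {L g + pscale s ZZ | g s. g \<in> Vs True i}" using p0t by auto
    next
      assume "x \<in> {L g + pscale s ZZ | g s. g \<in> Vs True i}"
      then obtain g s where gs: "g \<in> Vs True i" "x = L g + pscale s ZZ" by blast
      hence "x = p0 (L g + pscale (g z) EE + pscale s ZZ)" using p0t by simp
      thus "x \<in> p0 ` T" unfolding Teq using gs(1) by blast
    qed
  qed
  have spA: "pv.span A = A" unfolding Aspan by simp
  have "pv.span (insert ZZ A) = {x. \<exists>k. x - pscale k ZZ \<in> A}"
    using pv.span_insert[of ZZ A] spA by simp
  also have "\<dots> = p0 ` T"
  proof -
    have "(\<exists>k. x - pscale k ZZ \<in> A) \<longleftrightarrow> (\<exists>g s. x = L g + pscale s ZZ \<and> g \<in> Vs True i)" for x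
    proof
      assume "\<exists>k. x - pscale k ZZ \<in> A"
      then obtain k g where "g \<in> Vs True i" "x - pscale k ZZ = L g" unfolding A_def by blast
      thus "\<exists>g s. x = L g + pscale s ZZ \<and> g \<in> Vs True i"
        by (metis diff_add_cancel)
    next
      assume "\<exists>g s. x = L g + pscale s ZZ \<and> g \<in> Vs True i"
      thus "\<exists>k. x - pscale k ZZ \<in> A" unfolding A_def by force
    qed
    thus ?thesis unfolding p0T by blast
  qed
  finally have p0T2: "p0 ` T = pv.span (insert ZZ A)" ..
  have dp0: "pv.dim (p0 ` T) = pv.dim A + (if ZZ \<in> A then 0 else 1)"
  proof -
    have "A \<subseteq> pv.span ((\<lambda>m c. G (madd m c)) ` Mon True i)" unfolding Aspan by simp
    hence dA: "pv.dim (insert ZZ A) = (if ZZ \<in> pv.span A then pv.dim A else pv.dim A + 1)"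
      by (rule pv.dim_insert_fin) (simp add: finite_Mon)
    show ?thesis unfolding p0T2 pv.dim_span dA spA by simp
  qed
  have dK: "pv.dim {t\<in>T. p0 t = 0} = (if Ex then 1 else 0)"
  proof (cases Ex)
    case True
    then obtain g0 s0 where g0: "g0 \<in> Vs True i" "L g0 + pscale s0 ZZ = 0" "g0 z \<noteq> 0"
      unfolding Ex_def by blast
    have "{t\<in>T. p0 t = 0} = pv.span {EE}"
    proof
      show "{t\<in>T. p0 t = 0} \<subseteq> pv.span {EE}"
      proof
        fix t assume "t \<in> {t\<in>T. p0 t = 0}"
        then obtain g s where gs: "g \<in> Vs True i" "t = L g + pscale (g z) EE + pscale s ZZ" "p0 t = 0"
          unfolding Teq by blast
        have "L g + pscale s ZZ = 0" using gs(3) unfolding gs(2) p0t .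
        hence "t = pscale (g z) EE" using gs(2) by (metis add.commute add.left_commute add_0_right)
        thus "t \<in> pv.span {EE}" by (simp add: pv.span_base pv.span_scale)
      qed
    next
      show "pv.span {EE} \<subseteq> {t\<in>T. p0 t = 0}"
      proof
        fix t assume "t \<in> pv.span {EE}"
        then obtain k where k: "t = pscale k EE" using pv.span_singleton by blast
        define c where "c = k / g0 z"
        have gV: "pscale c g0 \<in> Vs True i" using g0(1) by (rule pv.subspace_scale[OF subspace_Vs])
        have Lc: "L (pscale c g0) = pscale c (L g0)" unfolding L_def by (rule cat_scale)
        have "L (pscale c g0) + pscale (c * s0) ZZ = pscale c (L g0 + pscale s0 ZZ)"
          unfolding Lc by (simp add: pscale_def fun_eq_iff algebra_simps)
        moreover have "pscale c (L g0 + pscale s0 ZZ) = 0" unfolding g0(2) by (simp add: pscale_def zero_fun_def)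
        ultimately have e0: "L (pscale c g0) + pscale (c * s0) ZZ = 0" by simp
        have "pscale c g0 z = k" using g0(3) by (simp add: c_def)
        hence "t = L (pscale c g0) + pscale (pscale c g0 z) EE + pscale (c * s0) ZZ"
          using e0 k by (metis add.commute add.left_commute add_0_right)
        hence "t \<in> T" unfolding Teq using gV by blast
        moreover have "p0 t = 0" unfolding k p0_scale p0E by (simp add: pscale_def zero_fun_def)
        ultimately show "t \<in> {t\<in>T. p0 t = 0}" by blast
      qed
    qed
    moreover have EE0: "EE \<noteq> 0" by (auto simp: EE_def monom1_def fun_eq_iff)
    moreover have "pv.dim {EE} = 1" using pv.dim_eq_card_independent[of "{EE}"] pv.dependent_single[of EE] EE0 by simp
    ultimately show ?thesis using True by (simp add: pv.dim_span)
  next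
    case False
    have "{t\<in>T. p0 t = 0} = {0}"
    proof
      show "{t\<in>T. p0 t = 0} \<subseteq> {0}"
      proof
        fix t assume "t \<in> {t\<in>T. p0 t = 0}"
        then obtain g s where gs: "g \<in> Vs True i" "t = L g + pscale (g z) EE + pscale s ZZ" "p0 t = 0"
          unfolding Teq by blast
        have e: "L g + pscale s ZZ = 0" using gs(3) unfolding gs(2) p0t .
        hence "g z = 0" using False gs(1) unfolding Ex_def by blast
        hence "t = 0" using gs(2) e by (simp add: pscale_def zero_fun_def)
        thus "t \<in> {0}" by simp
      qed
    next
      have "0 \<in> T" unfolding Tspan by (rule pv.span_zero)
      moreover have "p0 0 = (0 :: 'a pol)" by (simp add: p0_def zero_fun_def)
      ultimately show "{0} \<subseteq> {t\<in>T. p0 t = 0}" by blast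
    qed
    moreover have "pv.dim {0::'a pol} \<le> card ({}::'a pol set)" by (rule pv.dim_le_card) (auto simp: pv.span_zero)
    ultimately show ?thesis using False by simp
  qed
  show ?thesis
    unfolding hF[unfolded F_def] hG rn dK dp0
    by (simp add: A_def L_def ZZ_def Ex_def z_def)
qed

lemma all_var: "(\<forall>v. P v) \<longleftrightarrow> P vw \<and> P vx \<and> P vy \<and> P vz"
  by (metis var.exhaust)

lemma mle_iff: "mle a b \<longleftrightarrow> a vw \<le> b vw \<and> a vx \<le> b vx \<and> a vy \<le> b vy \<and> a vz \<le> b vz"
  unfolding mle_def all_var ..

lemma msub_apply[simp]: "msub a b v = a v - b v" by (simp add: msub_def)

definition shift :: "mono \<Rightarrow> ('a::zero) pol \<Rightarrow> 'a pol" where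
  "shift e g = (\<lambda>m. if mle e m then g (msub m e) else 0)"

lemma shift_madd: "shift e g (madd e n) = g n"
proof -
  have "mle e (madd e n)" by (simp add: mle_def)
  moreover have "msub (madd e n) e = n" by (simp add: mono_eq_iff)
  ultimately show ?thesis by (simp add: shift_def)
qed

lemma supp_shift: "supp (shift e g) = madd e ` supp g"
proof
  show "supp (shift e g) \<subseteq> madd e ` supp g"
  proof
    fix m assume "m \<in> supp (shift e g)"
    hence m: "mle e m" "g (msub m e) \<noteq> 0" by (auto simp: supp_def shift_def split: if_splits)
    have "m = madd e (msub m e)" using m(1) by (auto simp: mono_eq_iff mle_iff)
    thus "m \<in> madd e ` supp g" using m(2) by (auto simp: supp_def)
  qed
next
  show "madd e ` supp g \<subseteq> supp (shift e g)"
    by (auto simp: supp_def shift_madd)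
qed

lemma inj_madd: "inj (madd e)"
  by (auto simp: inj_def mono_eq_iff)

lemma madd_assoc: "madd (madd a b) c = madd a (madd b c)"
  by (simp add: mono_eq_iff)

lemma madd_lc: "madd a (madd b c) = madd b (madd a c)"
  by (simp add: madd_def fun_eq_iff ac_simps)

lemma madd_sh: "madd (madd e x) c = madd x (madd e c)"
  by (simp add: madd_def fun_eq_iff ac_simps)

lemma contract_shift:
  assumes "finite (supp g)"
  shows "contract (shift e g) \<Phi> = (\<lambda>c. contract g \<Phi> (madd e c))"
proof
  fix c
  have "contract (shift e g) \<Phi> c = (\<Sum>m\<in>madd e ` supp g. shift e g m * \<Phi> (madd m c))"
    by (simp add: contract_def supp_shift)
  also have "\<dots> = (\<Sum>n\<in>supp g. shift e g (madd e n) * \<Phi> (madd (madd e n) c))"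
    by (rule sum.reindex[unfolded comp_def]) (meson inj_madd inj_on_subset subset_UNIV)
  also have "\<dots> = (\<Sum>n\<in>supp g. g n * \<Phi> (madd n (madd e c)))"
    by (intro sum.cong refl) (simp add: shift_madd madd_sh)
  finally show "contract (shift e g) \<Phi> c = contract g \<Phi> (madd e c)" by (simp add: contract_def)
qed

lemma contract_comm:
  assumes "finite (supp f)" "finite (supp g)"
  shows "contract f (contract g \<Phi>) = contract g (contract f \<Phi>)"
proof
  fix c
  have "contract f (contract g \<Phi>) c = (\<Sum>m\<in>supp f. \<Sum>n\<in>supp g. f m * (g n * \<Phi> (madd n (madd m c))))"
    by (simp add: contract_def sum_distrib_left)
  also have "\<dots> = (\<Sum>n\<in>supp g. \<Sum>m\<in>supp f. f m * (g n * \<Phi> (madd n (madd m c))))"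
    by (rule sum.swap)
  also have "\<dots> = (\<Sum>n\<in>supp g. \<Sum>m\<in>supp f. g n * (f m * \<Phi> (madd m (madd n c))))"
    by (intro sum.cong refl) (simp add: madd_lc algebra_simps)
  also have "\<dots> = contract g (contract f \<Phi>) c"
    by (simp add: contract_def sum_distrib_left)
  finally show "contract f (contract g \<Phi>) c = contract g (contract f \<Phi>) c" .
qed

lemma shift_Vs:
  assumes g: "g \<in> Vs True i" and e: "e vw = 0"
  shows "shift e g \<in> Vs True (i + mdeg e)"
proof -
  have "finite (supp (shift e g))" using g by (simp add: supp_shift Vs_def)
  moreover have "homog (i + mdeg e) (shift e g)"
    using g unfolding homog_def
  proof (intro allI impI)
    fix m assume "shift e g m \<noteq> 0"
    hence "m \<in> supp (shift e g)" by (simp add: supp_def)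
    then obtain n where n: "n \<in> supp g" "m = madd e n" by (auto simp: supp_shift)
    thus "mdeg m = i + mdeg e" using g by (auto simp: Vs_def homog_def supp_def)
  qed
  moreover have "no_w (shift e g)"
    unfolding no_w_def
  proof (intro allI impI)
    fix m assume "shift e g m \<noteq> 0"
    hence "m \<in> supp (shift e g)" by (simp add: supp_def)
    then obtain n where n: "n \<in> supp g" "m = madd e n" by (auto simp: supp_shift)
    thus "m vw = 0" using g e by (auto simp: Vs_def no_w_def supp_def)
  qed
  ultimately show ?thesis by (simp add: Vs_def)
qed

lemma shift_z: "shift (expv 0 0 0 k) g (expv 0 0 0 (i + k)) = g (expv 0 0 0 i)"
proof -
  have "expv 0 0 0 (i + k) = madd (expv 0 0 0 k) (expv 0 0 0 i)" by (simp add: mono_eq_iff)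
  thus ?thesis by (simp add: shift_madd)
qed

lemma finite_mle: "finite {a. mle a m}"
proof -
  have "{a. mle a m} \<subseteq> (\<lambda>(a,b,c,d). expv a b c d) ` ({0..m vw} \<times> {0..m vx} \<times> {0..m vy} \<times> {0..m vz})"
  proof
    fix a assume "a \<in> {a. mle a m}"
    hence "a vw \<le> m vw" "a vx \<le> m vx" "a vy \<le> m vy" "a vz \<le> m vz" by (auto simp: mle_iff)
    thus "a \<in> (\<lambda>(a,b,c,d). expv a b c d) ` ({0..m vw} \<times> {0..m vx} \<times> {0..m vy} \<times> {0..m vz})"
      by (intro image_eqI[of _ _ "(a vw, a vx, a vy, a vz)"]) (auto intro: mono_expv)
  qed
  thus ?thesis by (rule finite_subset) auto
qed

lemma pmul_monom: "pmul (monom1 e) g m = (if mle e m then g (msub m e) else (0::'a::comm_ring_1))"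
proof -
  have "pmul (monom1 e) g m = (\<Sum>a\<in>{a. mle a m}. if a = e then g (msub m e) else 0)"
    unfolding pmul_def by (intro sum.cong refl) (auto simp: monom1_def)
  also have "\<dots> = (if mle e m then g (msub m e) else 0)"
    using finite_mle[of m] by (simp add: sum.delta')
  finally show ?thesis .
qed

lemma xyR'_zero:
  assumes "f \<in> xyR'" shows "f (expv 0 0 0 a) = (0::'a::comm_ring_1)"
  using assms by (auto simp: xyR'_def pmul_monom mle_iff)

lemma xyR'_intro:
  fixes f :: "'a::comm_ring_1 pol"
  assumes f: "f \<in> polys'" "homog a f" and z: "f (expv 0 0 0 a) = 0"
  shows "f \<in> xyR'"
proof -
  let ?x = "expv 0 1 0 0" and ?y = "expv 0 0 1 0"
  define g where "g m = f (madd m ?x)" for m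
  define h where "h m = (if m vx = 0 then f (madd m ?y) else 0)" for m
  have fin: "finite (supp f)" and nw: "no_w f" using f by (auto simp: polys'_def polys_def)
  have gs: "supp g \<subseteq> (\<lambda>m. msub m ?x) ` supp f"
  proof
    fix m assume "m \<in> supp g"
    hence "madd m ?x \<in> supp f" "m = msub (madd m ?x) ?x" by (auto simp: supp_def g_def mono_eq_iff)
    thus "m \<in> (\<lambda>m. msub m ?x) ` supp f" by blast
  qed
  have hs: "supp h \<subseteq> (\<lambda>m. msub m ?y) ` supp f"
  proof
    fix m assume "m \<in> supp h"
    hence "madd m ?y \<in> supp f" "m = msub (madd m ?y) ?y" by (auto simp: supp_def h_def mono_eq_iff split: if_splits)
    thus "m \<in> (\<lambda>m. msub m ?y) ` supp f" by blast
  qed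
  have gP: "g \<in> polys'"
    using finite_subset[OF gs finite_imageI[OF fin]] nw
    by (auto simp: polys'_def polys_def no_w_def g_def)
  have hP: "h \<in> polys'"
    using finite_subset[OF hs finite_imageI[OF fin]] nw
    by (auto simp: polys'_def polys_def no_w_def h_def)
  have "f = (\<lambda>m. pmul (monom1 ?x) g m + pmul (monom1 ?y) h m)"
  proof
    fix m
    show "f m = pmul (monom1 ?x) g m + pmul (monom1 ?y) h m"
    proof (cases "m vx = 0")
      case False
      hence "madd (msub m ?x) ?x = m" by (simp add: mono_eq_iff)
      thus ?thesis using False by (simp add: pmul_monom mle_iff g_def h_def)
    next
      case True
      show ?thesis
      proof (cases "m vy = 0")
        case False
        hence "madd (msub m ?y) ?y = m" by (simp add: mono_eq_iff)
        thus ?thesis using True False by (simp add: pmul_monom mle_iff g_def h_def)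
      next
        case False': True
        have "f m = 0"
        proof (rule ccontr)
          assume "f m \<noteq> 0"
          hence "m vw = 0" "mdeg m = a" using nw f(2) by (auto simp: no_w_def homog_def)
          hence "m = expv 0 0 0 a" using True False' by (simp add: mono_eq_iff mdeg_def)
          thus False using z \<open>f m \<noteq> 0\<close> by simp
        qed
        thus ?thesis using True False' by (simp add: pmul_monom mle_iff)
      qed
    qed
  qed
  thus ?thesis unfolding xyR'_def using gP hP by blast
qed

lemma down:
  fixes j n i :: nat and b :: "nat \<Rightarrow> bool"
  assumes mono: "\<And>i. 1 \<le> i \<Longrightarrow> i + 1 \<le> j - 1 \<Longrightarrow> b (i + 1) \<Longrightarrow> b i"
  shows "n \<le> j - 1 \<Longrightarrow> b n \<Longrightarrow> 1 \<le> i \<Longrightarrow> i \<le> n \<Longrightarrow> b i"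
proof (induction n)
  case 0 thus ?case by simp
next
  case (Suc n)
  show ?case
  proof (cases "i = Suc n")
    case True thus ?thesis using Suc by simp
  next
    case False
    hence "i \<le> n" using Suc by simp
    moreover have "b n" using mono[of n] Suc \<open>i \<le> n\<close> by simp
    ultimately show ?thesis using Suc by simp
  qed
qed

lemma comb:
  fixes j a :: nat and b :: "nat \<Rightarrow> bool"
  assumes a: "2 \<le> a" "a \<le> j"
    and mono: "\<And>i. 1 \<le> i \<Longrightarrow> i + 1 \<le> j - 1 \<Longrightarrow> b (i + 1) \<Longrightarrow> b i"
    and bj: "a \<le> j - 1 \<Longrightarrow> b (j - a)"
    and sym: "\<And>i. 1 \<le> i \<Longrightarrow> i \<le> j - 1 \<Longrightarrow>
       (if a \<le> i then 1 else 0) + (if b i then 1 else 0) = (if a \<le> j - i then 1 else 0) + (if b (j - i) then 1 else (0::nat))"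
  shows "(\<forall>i. 1 \<le> i \<longrightarrow> i \<le> j - 1 \<longrightarrow> (if a \<le> i then 1 else 0) + (if b i then 1 else 0) = Hseq j a i)
       \<or> ((\<forall>i. 1 \<le> i \<longrightarrow> i \<le> j - 1 \<longrightarrow> (if a \<le> i then 1 else 0) + (if b i then 1 else 0) = (1::nat)) \<and> j \<le> 2 * a)"
proof -
  note dn = down[of j b, OF mono]
  have A: "b i" if "1 \<le> i" "i \<le> j - a" for i
  proof -
    have "a \<le> j - 1" using that a by linarith
    thus ?thesis using dn[of "j - a" i] bj that a by simp
  qed
  have hi: "\<not> b i" if "1 \<le> i" "i \<le> j - 1" "a \<le> i" "j - i < a" for i
  proof -
    have "b (j - i)" using A[of "j - i"] that by linarith
    thus ?thesis using sym[OF that(1,2)] that by (auto split: if_splits)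
  qed
  show ?thesis
  proof (cases "2 * a \<le> j")
    case True
    have "(if a \<le> i then 1 else 0) + (if b i then 1 else 0) = Hseq j a i"
      if i: "1 \<le> i" "i \<le> j - 1" for i
    proof (cases "i \<le> j - a")
      case True
      thus ?thesis using A[OF i(1) True] i \<open>2 * a \<le> j\<close> by (auto simp: Hseq_def)
    next
      case False
      have "a \<le> i" "j - i < a" using False \<open>2 * a \<le> j\<close> i by linarith+
      hence "\<not> b i" using hi[OF i] by blast
      thus ?thesis using False i \<open>2 * a \<le> j\<close> by (auto simp: Hseq_def)
    qed
    thus ?thesis by blast
  next
    case False
    note big = False
    have msym: "b i = b (j - i)" if "1 \<le> i" "j - a < i" "i < a" for i
    proof -
      have h: "i \<le> j - 1" "\<not> a \<le> j - i" "\<not> a \<le> i" using that a by linarith+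
      show ?thesis using sym[OF that(1) h(1)] h(2,3) by (auto split: if_splits)
    qed
    show ?thesis
    proof (cases "\<exists>i1. j - a < i1 \<and> i1 < a \<and> b i1")
      case True
      then obtain i1 where i1: "j - a < i1" "i1 < a" "b i1" by blast
      have mid: "b i" if "j - a < i" "i < a" for i
      proof (cases "i \<le> i1")
        case True thus ?thesis using dn[of i1 i] i1 that a by simp
      next
        case False
        have "b (j - i1)" using msym[of i1] i1 a by simp
        hence "b (j - i)" using dn[of "j - i1" "j - i"] False that i1 a by simp
        thus ?thesis using msym[of i] that a by simp
      qed
      have "(if a \<le> i then 1 else 0) + (if b i then 1 else 0) = (1::nat)"
        if i: "1 \<le> i" "i \<le> j - 1" for i
      proof (cases "i \<le> j - a")
        case True thus ?thesis using A[OF i(1) True] big by auto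
      next
        case False
        show ?thesis
        proof (cases "i < a")
          case True thus ?thesis using mid[of i] False by auto
        next
          case False
          thus ?thesis using hi[OF i] big by auto
        qed
      qed
      thus ?thesis using big by auto
    next
      case False
      have "(if a \<le> i then 1 else 0) + (if b i then 1 else 0) = Hseq j a i"
        if i: "1 \<le> i" "i \<le> j - 1" for i
      proof (cases "i \<le> j - a")
        case True thus ?thesis using A[OF i(1) True] big i by (auto simp: Hseq_def)
      next
        case nle: False
        show ?thesis
        proof (cases "i < a")
          case True thus ?thesis using False nle big i by (auto simp: Hseq_def)
        next
          case ge: False
          thus ?thesis using hi[OF i] nle big i by (auto simp: Hseq_def)
        qed
      qed
      thus ?thesis by blast
    qed
  qed
qed

lemma supp_monom1: "supp (monom1 e :: 'a::field pol) = {e}"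
  by (auto simp: supp_def monom1_def)

lemma contract_monom: "contract (monom1 e :: 'a::field pol) \<Phi> = (\<lambda>c. \<Phi> (madd e c))"
  unfolding contract_def supp_monom1 by (simp add: monom1_def)

lemma contract_add2: "contract f (\<lambda>m. A m + B m) = (\<lambda>c. contract f A c + contract f B c)"
  by (simp add: contract_def fun_eq_iff distrib_left sum.distrib)

lemma contract_zero: "contract f (\<lambda>_. 0) = (\<lambda>_. 0)"
  by (simp add: contract_def)

lemma mdeg0: "mdeg m = 0 \<Longrightarrow> m = (\<lambda>_. 0)"
  by (simp add: mdeg_def mono_eq_iff)

lemma madd0[simp]: "madd (\<lambda>_. 0) c = c" by (simp add: madd_def)

lemma Mon0: "Mon fl 0 = {\<lambda>_. 0}"
  by (auto simp: Mon_def mdeg0) (simp add: mdeg_def)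

lemma dim_rows0:
  fixes \<Phi> :: "'a::field pol"
  assumes "\<Phi> \<noteq> 0"
  shows "pv.dim ((\<lambda>m c. \<Phi> (madd m c)) ` Mon fl 0) = 1"
proof -
  have "(\<lambda>m c. \<Phi> (madd m c)) ` Mon fl 0 = {\<Phi>}" by (simp add: Mon0)
  thus ?thesis using pv.dim_eq_card_independent[of "{\<Phi>}"] pv.dependent_single[of \<Phi>] assms by simp
qed

lemma dim_rows_big:
  fixes \<Phi> :: "'a::field pol"
  assumes H: "homog j \<Phi>" and ij: "j < i"
  shows "pv.dim ((\<lambda>m c. \<Phi> (madd m c)) ` Mon fl i) = 0"
proof -
  have "(\<lambda>m c. \<Phi> (madd m c)) ` Mon fl i \<subseteq> pv.span {}"
  proof
    fix r assume "r \<in> (\<lambda>m c. \<Phi> (madd m c)) ` Mon fl i"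
    then obtain m where m: "m \<in> Mon fl i" "r = (\<lambda>c. \<Phi> (madd m c))" by blast
    have "r = 0"
    proof
      fix c
      show "r c = 0 c"
      proof (rule ccontr)
        assume "r c \<noteq> 0 c"
        hence "\<Phi> (madd m c) \<noteq> 0" using m by simp
        hence "mdeg (madd m c) = j" using H unfolding homog_def by blast
        thus False using m ij by (simp add: Mon_def)
      qed
    qed
    thus "r \<in> pv.span {}" by (simp add: pv.span_zero)
  qed
  hence "pv.dim ((\<lambda>m c. \<Phi> (madd m c)) ` Mon fl i) \<le> card ({} :: 'a pol set)"
    by (rule pv.dim_le_card) simp
  thus ?thesis by simp
qed

theorem lemma3p19:
  fixes G :: "('k::alg_closed_field) pol" and j :: nat
  assumes j: "1 \<le> j"
    and G: "homog j G" "no_w G"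
    and I2: "{f \<in> Ann (\<lambda>m. G m + monom1 (expv 1 0 0 (j - 1)) m). homog 2 f}
             = {\<lambda>m. a * monom1 (expv 2 0 0 0) m + b * monom1 (expv 1 1 0 0) m
                      + c * monom1 (expv 1 0 1 0) m | a b c. True}"
  shows "let F = (\<lambda>m. G m + monom1 (expv 1 0 0 (j - 1)) m);
             I = Ann F; J' = Ann G \<inter> polys'; \<alpha> = alpha_inv J'
         in (2 \<le> \<alpha> \<and> \<alpha> \<le> j \<and> hilb polys I = (\<lambda>i. hilb polys' J' i + Hseq j \<alpha> i))
            \<or> (hilb polys I = (\<lambda>i. hilb polys' J' i + H0seq j i) \<and> j \<le> 2 * \<alpha>)"
proof -
  define e where "e = expv 1 0 0 (j - 1)"
  define F where "F = (\<lambda>m. G m + monom1 e m)"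
  define J' where "J' = Ann G \<inter> polys'"
  define \<alpha> where "\<alpha> = alpha_inv J'"
  define z where "z k = expv 0 0 0 k" for k
  have I2': "f m0 = 0" if "f \<in> Ann F" "homog 2 f" "m0 vw = 0" for f m0
  proof -
    have mem: "f \<in> {f \<in> Ann (\<lambda>m. G m + monom1 (expv 1 0 0 (j - 1)) m). homog 2 f}"
      using that unfolding F_def e_def by blast
    have "f \<in> {\<lambda>m. a * monom1 (expv 2 0 0 0) m + b * monom1 (expv 1 1 0 0) m
                      + c * monom1 (expv 1 0 1 0) m | a b c. True}"
      using mem unfolding I2 .
    then obtain a b c where "f = (\<lambda>m. a * monom1 (expv 2 0 0 0) m + b * monom1 (expv 1 1 0 0) m
                      + c * monom1 (expv 1 0 1 0) m)" by blast
    thus ?thesis using that(3) by (auto simp: monom1_def)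
  qed
  have Gw: "G m = 0" if "m vw \<noteq> 0" for m using G(2) that by (auto simp: no_w_def)
  have Gd: "G m = 0" if "mdeg m \<noteq> j" for m using G(1) that by (auto simp: homog_def)
  have "\<exists>m1. G m1 \<noteq> 0 \<and> m1 \<noteq> z j"
  proof (rule ccontr)
    assume "\<not> (\<exists>m1. G m1 \<noteq> 0 \<and> m1 \<noteq> z j)"
    hence Gz: "G m = 0" if "m \<noteq> z j" for m using that by blast
    let ?x = "expv 0 2 0 0"
    have "monom1 ?x \<in> Ann F"
    proof -
      have "(monom1 ?x :: 'k pol) \<in> polys" unfolding polys_def using supp_monom1[of ?x, where 'a='k] by simp
      moreover have "contract (monom1 ?x) F = (\<lambda>_. 0)"
      proof
        fix c
        have "madd ?x c \<noteq> z j" "madd ?x c \<noteq> e" by (auto simp: mono_eq_iff z_def e_def)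
        thus "contract (monom1 ?x) F c = 0" unfolding contract_monom F_def using Gz by (simp add: monom1_def)
      qed
      ultimately show ?thesis by (simp add: Ann_def)
    qed
    moreover have "homog 2 (monom1 ?x :: 'k pol)" by (simp add: homog_def monom1_def)
    ultimately have "monom1 ?x ?x = (0::'k)" using I2' by simp
    thus False by (simp add: monom1_def)
  qed
  then obtain m1 where m1: "G m1 \<noteq> 0" "m1 \<noteq> z j" by blast
  have m1': "m1 vw = 0" "mdeg m1 = j" using m1 Gw Gd by blast+
  define r where "r = G (z j) / G m1"
  define g0 :: "'k pol" where "g0 = monom1 (z j) + pscale (- r) (monom1 m1)"
  have zjM: "z j \<in> Mon True j" and m1M: "m1 \<in> Mon True j" using m1' by (auto simp: Mon_def z_def)
  have g0V: "g0 \<in> Vs True j" unfolding g0_def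
    by (intro pv.subspace_add[OF subspace_Vs] pv.subspace_scale[OF subspace_Vs] monom_in_Vs zjM m1M)
  have "cat G (Mon True j) g0 = 0"
  proof
    fix c
    have "cat G (Mon True j) g0 c = G (madd (z j) c) - r * G (madd m1 c)"
      unfolding g0_def cat_add cat_scale cat_monom[OF zjM finite_Mon] cat_monom[OF m1M finite_Mon] by simp
    also have "\<dots> = 0"
    proof (cases "c = (\<lambda>_. 0)")
      case True
      note c0 = True
      have "madd m (\<lambda>_. 0) = m" for m by (simp add: madd_def)
      thus ?thesis using m1(1) c0 by (simp add: r_def)
    next
      case False
      hence "mdeg c \<noteq> 0" using mdeg0 by blast
      hence "mdeg (madd (z j) c) \<noteq> j" "mdeg (madd m1 c) \<noteq> j" using m1' by (auto simp: z_def)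
      thus ?thesis using Gd by simp
    qed
    finally show "cat G (Mon True j) g0 c = 0 c" by simp
  qed
  hence cg0: "contract g0 G = (\<lambda>_. 0)" using cat_contract[OF g0V] by (simp add: zero_fun_def)
  have g0J: "g0 \<in> J'" using g0V cg0 by (auto simp: J'_def Ann_def Vs_def polys'_def polys_def)
  have g0z: "g0 (z j) = 1" using m1(2) by (simp add: g0_def monom1_def)
  have g0x: "g0 \<notin> xyR'" using xyR'_zero[of g0 j] g0z by (auto simp: z_def)
  have g0h: "homog j g0" using g0V by (simp add: Vs_def)
  define P where "P a = (1 \<le> a \<and> (\<exists>f\<in>J'. homog a f \<and> f \<notin> xyR'))" for a
  have Pj: "P j" using j g0J g0h g0x by (auto simp: P_def)
  have \<alpha>L: "\<alpha> = (LEAST a. P a)" by (simp add: \<alpha>_def alpha_inv_def P_def)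
  have P\<alpha>: "P \<alpha>" unfolding \<alpha>L by (rule LeastI[of P, OF Pj])
  have \<alpha>j: "\<alpha> \<le> j" unfolding \<alpha>L by (rule Least_le[of P, OF Pj])
  have \<alpha>le: "\<alpha> \<le> i" if "P i" for i unfolding \<alpha>L by (rule Least_le[of P, OF that])
  obtain f0 where f0: "f0 \<in> J'" "homog \<alpha> f0" "f0 \<notin> xyR'" and \<alpha>1: "1 \<le> \<alpha>"
    using P\<alpha> by (auto simp: P_def)
  have f0V: "f0 \<in> Vs True \<alpha>" using f0 by (auto simp: J'_def Vs_def polys'_def polys_def)
  have f0P: "f0 \<in> polys'" using f0 by (simp add: J'_def)
  have f0z: "f0 (z \<alpha>) \<noteq> 0" using xyR'_intro[OF f0P f0(2)] f0(3) by (auto simp: z_def)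
  have cf0: "contract f0 G = (\<lambda>_. 0)" using f0 by (simp add: J'_def Ann_def)
  have finf0: "finite (supp f0)" using f0V by (simp add: Vs_def)
  have \<alpha>2: "2 \<le> \<alpha>"
  proof (rule ccontr)
    assume "\<not> 2 \<le> \<alpha>"
    hence a1: "\<alpha> = 1" using \<alpha>1 by simp
    let ?x = "expv 0 1 0 0"
    define q where "q = shift ?x f0"
    have qV: "q \<in> Vs True 2" using shift_Vs[OF f0V, of ?x] a1 by (simp add: q_def numeral_2_eq_2)
    have cF: "contract f0 F = (\<lambda>c. contract f0 G c + contract f0 (monom1 e) c)"
      unfolding F_def by (rule contract_add2)
    have "contract q F = (\<lambda>_. 0)"
    proof
      fix c
      have "contract f0 (monom1 e) (madd ?x c) = 0"
        unfolding contract_def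
      proof (intro sum.neutral ballI)
        fix m
        have "madd m (madd ?x c) \<noteq> e" by (auto simp: mono_eq_iff e_def)
        thus "f0 m * monom1 e (madd m (madd ?x c)) = 0" by (simp add: monom1_def)
      qed
      thus "contract q F c = 0"
        unfolding q_def contract_shift[OF finf0] cF cf0 by simp
    qed
    moreover have "q \<in> polys" using qV by (simp add: Vs_def polys_def)
    ultimately have "q \<in> Ann F" by (simp add: Ann_def)
    moreover have "homog 2 q" using qV by (simp add: Vs_def)
    ultimately have "q (madd ?x (z 1)) = 0" using I2' by (simp add: z_def)
    moreover have "q (madd ?x (z 1)) = f0 (z 1)" by (simp add: q_def shift_madd)
    ultimately show False using f0z a1 by simp
  qed
  define aa where "aa i = (\<exists>g\<in>Vs True i. cat G (Mon True i) g = 0 \<and> g (z i) \<noteq> 0)" for i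
  define bb where "bb i = (\<not> (\<exists>g\<in>Vs True i. g (z i) = 0 \<and> cat G (Mon True i) g = monom1 (z (j - i))))" for i
  have aa_iff: "aa i \<longleftrightarrow> \<alpha> \<le> i" if i1: "1 \<le> i" for i
  proof
    assume "aa i"
    then obtain g where g: "g \<in> Vs True i" "cat G (Mon True i) g = 0" "g (z i) \<noteq> 0" by (auto simp: aa_def)
    have "contract g G = (\<lambda>_. 0)" using cat_contract[OF g(1)] g(2) by (simp add: zero_fun_def)
    hence "g \<in> J'" using g(1) by (auto simp: J'_def Ann_def Vs_def polys'_def polys_def)
    moreover have "g \<notin> xyR'" using xyR'_zero[of g i] g(3) by (auto simp: z_def)
    moreover have "homog i g" using g(1) by (simp add: Vs_def)
    ultimately have "P i" using i1 by (auto simp: P_def)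
    thus "\<alpha> \<le> i" by (rule \<alpha>le)
  next
    assume ai: "\<alpha> \<le> i"
    define g where "g = shift (z (i - \<alpha>)) f0"
    have gV: "g \<in> Vs True i" using shift_Vs[OF f0V, of "z (i - \<alpha>)"] ai by (simp add: g_def z_def)
    have "contract g G = (\<lambda>_. 0)" unfolding g_def contract_shift[OF finf0] cf0 by simp
    hence "cat G (Mon True i) g = 0" using cat_contract[OF gV] by (simp add: zero_fun_def)
    moreover have "g (z i) = f0 (z \<alpha>)"
      using shift_z[of "i - \<alpha>" f0 \<alpha>] ai by (simp add: g_def z_def)
    ultimately show "aa i" using gV f0z by (auto simp: aa_def)
  qed
  have bb_mono: "bb i" if "1 \<le> i" "i + 1 \<le> j - 1" "bb (i + 1)" for i
  proof (rule ccontr)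
    assume "\<not> bb i"
    then obtain g where g: "g \<in> Vs True i" "g (z i) = 0" "cat G (Mon True i) g = monom1 (z (j - i))"
      by (auto simp: bb_def)
    have fg: "finite (supp g)" using g(1) by (simp add: Vs_def)
    define g' where "g' = shift (z 1) g"
    have g'V: "g' \<in> Vs True (i + 1)" using shift_Vs[OF g(1), of "z 1"] by (simp add: g'_def z_def)
    have "g' (z (i + 1)) = g (z i)" using shift_z[of 1 g i] by (simp add: g'_def z_def)
    hence g'z: "g' (z (i + 1)) = 0" using g(2) by simp
    have cg: "contract g G = monom1 (z (j - i))" using cat_contract[OF g(1)] g(3) by simp
    have "contract g' G = monom1 (z (j - (i + 1)))"
    proof
      fix c
      have "(madd (z 1) c = z (j - i)) = (c = z (j - (i + 1)))"
        using that(2) by (auto simp: mono_eq_iff z_def)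
      thus "contract g' G c = monom1 (z (j - (i + 1))) c"
        unfolding g'_def contract_shift[OF fg] cg by (simp add: monom1_def)
    qed
    hence "cat G (Mon True (i + 1)) g' = monom1 (z (j - (i + 1)))" using cat_contract[OF g'V] by simp
    hence "\<not> bb (i + 1)" using g'V g'z by (auto simp: bb_def)
    thus False using that(3) by simp
  qed
  have bb_j: "bb (j - \<alpha>)" if "\<alpha> \<le> j - 1"
  proof (rule ccontr)
    assume "\<not> bb (j - \<alpha>)"
    then obtain g where g: "g \<in> Vs True (j - \<alpha>)" "cat G (Mon True (j - \<alpha>)) g = monom1 (z (j - (j - \<alpha>)))"
      by (auto simp: bb_def)
    have fg: "finite (supp g)" using g(1) by (simp add: Vs_def)
    have cg: "contract g G = monom1 (z \<alpha>)" using cat_contract[OF g(1)] g(2) \<alpha>j by simp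
    have "contract f0 (contract g G) = contract g (contract f0 G)" by (rule contract_comm[OF finf0 fg])
    hence e1: "contract f0 (monom1 (z \<alpha>)) = (\<lambda>_. 0)" unfolding cg cf0 contract_zero .
    have "contract f0 (monom1 (z \<alpha>)) (\<lambda>_. 0) = (\<Sum>m\<in>supp f0. if m = z \<alpha> then f0 m else 0)"
      unfolding contract_def by (intro sum.cong refl) (auto simp: monom1_def madd_def)
    also have "\<dots> = f0 (z \<alpha>)" using finf0 f0z by (simp add: supp_def)
    finally show False using e1 f0z by simp
  qed
  define hA where "hA = hilb polys (Ann F)"
  define hB where "hB = hilb polys' J'"
  define X where "X i = (if \<alpha> \<le> i then 1 else 0) + (if bb i then 1 else (0::nat))" for i
  have mid: "hA i = hB i + X i" if i: "1 \<le> i" "i \<le> j - 1" for i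
  proof -
    have d: "hA i = hB i
       + (if monom1 (expv 0 0 0 (j-i)) \<in> cat G (Mon True i) ` Vs True i then 0 else 1)
       + (if \<exists>g\<in>Vs True i. \<exists>s. cat G (Mon True i) g + pscale s (monom1 (expv 0 0 0 (j-i))) = 0
               \<and> g (expv 0 0 0 i) \<noteq> 0 then 1 else 0)"
      unfolding hA_def hB_def F_def e_def J'_def by (rule dimT[OF G i])
    have cc: "(if monom1 (expv 0 0 0 (j-i)) \<in> cat G (Mon True i) ` Vs True i then 0 else 1)
       + (if \<exists>g\<in>Vs True i. \<exists>s. cat G (Mon True i) g + pscale s (monom1 (expv 0 0 0 (j-i))) = 0
               \<and> g (expv 0 0 0 i) \<noteq> 0 then 1 else 0)
       = (if \<exists>g\<in>Vs True i. cat G (Mon True i) g = 0 \<and> g (expv 0 0 0 i) \<noteq> 0 then 1 else 0)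
         + (if \<exists>g\<in>Vs True i. g (expv 0 0 0 i) = 0 \<and> cat G (Mon True i) g = monom1 (expv 0 0 0 (j-i)) then 0 else (1::nat))"
      by (rule case_count[OF cat_add cat_scale _ _ subspace_Vs]) (simp_all add: pscale_def)
    have "(if \<exists>g\<in>Vs True i. cat G (Mon True i) g = 0 \<and> g (expv 0 0 0 i) \<noteq> 0 then 1 else 0)
         + (if \<exists>g\<in>Vs True i. g (expv 0 0 0 i) = 0 \<and> cat G (Mon True i) g = monom1 (expv 0 0 0 (j-i)) then 0 else (1::nat))
         = X i"
      using aa_iff[OF i(1)] unfolding X_def aa_def bb_def z_def by simp
    thus ?thesis using d cc by simp
  qed
  have FH: "homog j F"
    unfolding homog_def
  proof (intro allI impI)
    fix m assume "F m \<noteq> 0"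
    hence "G m \<noteq> 0 \<or> m = e" by (auto simp: F_def monom1_def split: if_splits)
    thus "mdeg m = j" using Gd j by (auto simp: e_def)
  qed
  have hA_rows: "hA i = pv.dim ((\<lambda>m c. F (madd m c)) ` Mon False i)" for i
    using HF_rows[of "Ann F" False F i] by (simp add: Sset_def hA_def)
  have hB_rows: "hB i = pv.dim ((\<lambda>m c. G (madd m c)) ` Mon True i)" for i
    using HF_rows[of J' True G i] by (auto simp: Sset_def hB_def J'_def)
  have symA: "hA i = hA (j - i)" if "i \<le> j" for i
    unfolding hA_rows by (rule sym_rows[OF FH _ that]) simp
  have symB: "hB i = hB (j - i)" if "i \<le> j" for i
    unfolding hB_rows by (rule sym_rows[OF G(1) _ that]) (simp add: G(2))
  have F0: "F \<noteq> 0"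
  proof
    assume "F = 0"
    hence "F e = 0" by simp
    moreover have "G e = 0" using Gw by (simp add: e_def)
    ultimately show False by (simp add: F_def monom1_def)
  qed
  have G0: "G \<noteq> 0" using m1(1) by auto
  have end0: "hA 0 = hB 0" unfolding hA_rows hB_rows dim_rows0[OF F0] dim_rows0[OF G0] ..
  have ends: "hA i = hB i" if "i = 0 \<or> j \<le> i" for i
  proof (cases "i = 0")
    case True thus ?thesis using end0 by simp
  next
    case False
    show ?thesis
    proof (cases "i = j")
      case True thus ?thesis using symA[of j] symB[of j] end0 by simp
    next
      case False
      hence ji: "j < i" using that \<open>i \<noteq> 0\<close> by simp
      show ?thesis unfolding hA_rows hB_rows dim_rows_big[OF FH ji] dim_rows_big[OF G(1) ji] ..
    qed
  qed
  have symX: "X i = X (j - i)" if i: "1 \<le> i" "i \<le> j - 1" for i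
  proof -
    have i2: "1 \<le> j - i" "j - i \<le> j - 1" using i by simp_all
    have "j - (j - i) = i" using i by simp
    thus ?thesis using mid[OF i] mid[OF i2] symA[of i] symB[of i] i by simp
  qed
  have cmb: "(\<forall>i. 1 \<le> i \<longrightarrow> i \<le> j - 1 \<longrightarrow> X i = Hseq j \<alpha> i)
       \<or> ((\<forall>i. 1 \<le> i \<longrightarrow> i \<le> j - 1 \<longrightarrow> X i = 1) \<and> j \<le> 2 * \<alpha>)"
    unfolding X_def
  proof (rule comb[OF \<alpha>2 \<alpha>j])
    show "\<And>i. 1 \<le> i \<Longrightarrow> i + 1 \<le> j - 1 \<Longrightarrow> bb (i + 1) \<Longrightarrow> bb i" by (rule bb_mono)
    show "\<alpha> \<le> j - 1 \<Longrightarrow> bb (j - \<alpha>)" by (rule bb_j)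
    show "\<And>i. 1 \<le> i \<Longrightarrow> i \<le> j - 1 \<Longrightarrow> (if \<alpha> \<le> i then 1 else 0) + (if bb i then 1 else 0)
       = (if \<alpha> \<le> j - i then 1 else 0) + (if bb (j - i) then 1 else (0::nat))"
      using symX unfolding X_def by blast
  qed
  have main: "(2 \<le> \<alpha> \<and> \<alpha> \<le> j \<and> hA = (\<lambda>i. hB i + Hseq j \<alpha> i))
            \<or> (hA = (\<lambda>i. hB i + H0seq j i) \<and> j \<le> 2 * \<alpha>)"
    using cmb
  proof
    assume c1: "\<forall>i. 1 \<le> i \<longrightarrow> i \<le> j - 1 \<longrightarrow> X i = Hseq j \<alpha> i"
    have "hA = (\<lambda>i. hB i + Hseq j \<alpha> i)"
    proof
      fix i
      show "hA i = hB i + Hseq j \<alpha> i"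
      proof (cases "i = 0 \<or> j \<le> i")
        case True thus ?thesis using ends[OF True] by (auto simp: Hseq_def)
      next
        case False thus ?thesis using mid[of i] c1 by auto
      qed
    qed
    thus ?thesis using \<alpha>2 \<alpha>j by blast
  next
    assume c2: "(\<forall>i. 1 \<le> i \<longrightarrow> i \<le> j - 1 \<longrightarrow> X i = 1) \<and> j \<le> 2 * \<alpha>"
    have "hA = (\<lambda>i. hB i + H0seq j i)"
    proof
      fix i
      show "hA i = hB i + H0seq j i"
      proof (cases "i = 0 \<or> j \<le> i")
        case True thus ?thesis using ends[OF True] by (auto simp: H0seq_def)
      next
        case False thus ?thesis using mid[of i] c2 by (auto simp: H0seq_def)
      qed
    qed
    thus ?thesis using c2 by blast
  qed
  show ?thesis using main unfolding Let_def hA_def hB_def F_def e_def J'_def \<alpha>_def .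
qed

end
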